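(* Let $X$ be a hyperbolic metric on $S$ and let $\alpha,\beta,\gamma\in\hat{\pi}$ be such that the $X$-geodesics $\alpha(X)$ and $\beta(X)$ intersect transversally. Let $P$ be an $(\alpha(X),\beta(X))$-intersection point. Then the equality $\widetilde{(\alpha^m*_P\beta)}_0=\widetilde{\gamma}$ holds for at most two positive integers $m$, and likewise the equality $\widetilde{(\alpha^m*_P\beta)}_\infty=\widetilde{\gamma}$ holds for at most two positive integers $m$.
   Context: $S$ is an oriented surface (possibly with boundary and punctures) of negative Euler characteristic; $\hat{\pi}$ is the set of free homotopy classes of directed closed curves on $S$. For a hyperbolic metric $X$ on $S$ (a point of Teichmüller space) and $\alpha\in\hat{\pi}$, $\alpha(X)$ denotes the geodesic representative of $\alpha$. If $a,b$ are closed curves intersecting transversally, an $(a,b)$-intersection point is a point $P\in a\cap b$ together with a choice of a pair of small arcs, one of $a$ and one of $b$, intersecting only at $P$. For $\alpha^m$ ($m\ge1$) the geodesic $\alpha^m(X)$ is $\alpha(X)$ traversed $m$ times, so $P$ is also regarded as an $(\alpha^m(X),\beta(X))$-intersection point. For directed curves $\alpha,\beta$ meeting transversally at $P$, with $\varepsilon_P(\alpha,\beta)=\pm1$ the sign of the intersection at $P$ and $\alpha_P,\beta_P$ the loops based at $P$, define $(\alpha*_P\beta)_0=|\alpha_P\beta_P^{\varepsilon_P(\alpha,\beta)}|$ and $(\alpha*_P\beta)_\infty=|\alpha_P\beta_P^{-\varepsilon_P(\alpha,\beta)}|$, where $|\cdot|$ denotes free homotopy class. For $x\in\hat{\pi}$,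 $\widetilde{x}$ denotes its free homotopy class with orientation forgotten (so $\widetilde{x}=\widetilde{y}$ iff $y=x$ or $y=x^{-1}$). *)

theory Defs
  imports "HOL-Analysis.Analysis"
begin

text \<open>Model: a hyperbolic surface (S,X) is the quotient of the upper half plane H by a
torsion-free, finitely generated Fuchsian group. We work with the preimage Gamma of
this group in SL(2,R) (so Gamma contains -1). Free homotopy classes of directed closed
curves are conjugacy classes in Gamma taken up to sign (i.e. conjugacy classes in PSL).\<close>

type_synonym mat2 = "real^2^2"

definition SL2 :: "mat2 set" where
  "SL2 = {M. det M = 1}"

fun mpow :: "mat2 \<Rightarrow> nat \<Rightarrow> mat2" where
  "mpow M 0 = mat 1"
| "mpow M (Suc n) = M ** mpow M n"

definition uhp :: "complex set" where
  "uhp = {z. Im z > 0}"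

definition mob :: "mat2 \<Rightarrow> complex \<Rightarrow> complex" where
  "mob M z = (complex_of_real (M$1$1) * z + complex_of_real (M$1$2)) /
             (complex_of_real (M$2$1) * z + complex_of_real (M$2$2))"

definition hdist :: "complex \<Rightarrow> complex \<Rightarrow> real" where
  "hdist z w = arcosh (1 + (cmod (z - w))^2 / (2 * Im z * Im w))"

definition hyperbolic_elt :: "mat2 \<Rightarrow> bool" where
  "hyperbolic_elt M \<longleftrightarrow> M \<in> SL2 \<and> \<bar>trace M\<bar> > 2"

text \<open>The axis of an isometry: the set of points of minimal displacement
(for a hyperbolic element this is its invariant geodesic).\<close>
definition axis :: "mat2 \<Rightarrow> complex set" where
  "axis M = {z \<in> uhp. \<forall>w \<in> uhp. hdist z (mob M z) \<le> hdist w (mob M w)}"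

inductive_set generated :: "mat2 set \<Rightarrow> mat2 set" for F where
  gen_one: "mat 1 \<in> generated F"
| gen_mult: "f \<in> F \<Longrightarrow> x \<in> generated F \<Longrightarrow> f ** x \<in> generated F"
| gen_inv: "f \<in> F \<Longrightarrow> x \<in> generated F \<Longrightarrow> matrix_inv f ** x \<in> generated F"

definition fuchsian :: "mat2 set \<Rightarrow> bool" where
  "fuchsian \<Gamma> \<longleftrightarrow>
     \<Gamma> \<subseteq> SL2 \<and> mat 1 \<in> \<Gamma> \<and> - mat 1 \<in> \<Gamma> \<and>
     (\<forall>M\<in>\<Gamma>. \<forall>N\<in>\<Gamma>. M ** N \<in> \<Gamma>) \<and> (\<forall>M\<in>\<Gamma>. matrix_inv M \<in> \<Gamma>) \<and>
     (\<forall>M\<in>\<Gamma>. \<exists>e>0. \<forall>N\<in>\<Gamma>. dist N M < e \<longrightarrow> N = M) \<and>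
     (\<forall>M\<in>\<Gamma>. \<not> \<bar>trace M\<bar> < 2) \<and>
     (\<exists>F. finite F \<and> F \<subseteq> \<Gamma> \<and> generated F = \<Gamma>)"

definition fclass :: "mat2 set \<Rightarrow> mat2 \<Rightarrow> mat2 set" where
  "fclass \<Gamma> M = {s *\<^sub>R (g ** M ** matrix_inv g) | g s. g \<in> \<Gamma> \<and> (s = 1 \<or> s = -1)}"

definition pihat :: "mat2 set \<Rightarrow> mat2 set set" where
  "pihat \<Gamma> = fclass \<Gamma> ` \<Gamma>"

definition cinv :: "mat2 set \<Rightarrow> mat2 set" where
  "cinv x = matrix_inv ` x"

definition utilde :: "mat2 set \<Rightarrow> mat2 set set" where
  "utilde x = {x, cinv x}"

text \<open>The geodesic representatives alpha(X), beta(X) exist and intersect transversally: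
both classes are hyperbolic and no lift of alpha(X) coincides with a lift of beta(X).\<close>
definition transversal :: "mat2 set \<Rightarrow> mat2 set \<Rightarrow> bool" where
  "transversal \<alpha> \<beta> \<longleftrightarrow> (\<forall>A\<in>\<alpha>. hyperbolic_elt A) \<and> (\<forall>B\<in>\<beta>. hyperbolic_elt B) \<and>
      (\<forall>A\<in>\<alpha>. \<forall>B\<in>\<beta>. axis A \<noteq> axis B)"

text \<open>An (alpha(X),beta(X))-intersection point P is given by a pair (A',B') of
representatives whose axes (lifts of the chosen arcs of alpha(X) and beta(X)) meet at a
lift of P; A' and B' are then the based loops alpha_P and beta_P. (Intersection points are
the orbits of such pairs under simultaneous conjugation; we work with representatives.)\<close>
definition ipoints :: "mat2 set \<Rightarrow> mat2 set \<Rightarrow> (mat2 \<times> mat2) set" where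
  "ipoints \<alpha> \<beta> = {(A, B). A \<in> \<alpha> \<and> B \<in> \<beta> \<and> axis A \<inter> axis B \<noteq> {}}"

definition loop_fst :: "mat2 \<times> mat2 \<Rightarrow> mat2" where "loop_fst P = fst P"
definition loop_snd :: "mat2 \<times> mat2 \<Rightarrow> mat2" where "loop_snd P = snd P"

definition star_e :: "mat2 set \<Rightarrow> nat \<Rightarrow> mat2 \<times> mat2 \<Rightarrow> int \<Rightarrow> mat2 set" where
  "star_e \<Gamma> m P e = fclass \<Gamma> (mpow (loop_fst P) m **
       (if e = 1 then loop_snd P else matrix_inv (loop_snd P)))"

end

theory Submission
  imports Defs
begin

definition adj2 :: "mat2 \<Rightarrow> mat2" where
  "adj2 M = (\<chi> i j. if i = 1 then (if j = 1 then M$2$2 else - M$1$2)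
                      else (if j = 1 then - M$2$1 else M$1$1))"

lemma adj2_right: "det M = 1 \<Longrightarrow> M ** adj2 M = mat 1"
  by (simp add: adj2_def vec_eq_iff forall_2 matrix_matrix_mult_def sum_2 mat_def det_2 algebra_simps)

lemma adj2_left: "det M = 1 \<Longrightarrow> adj2 M ** M = mat 1"
  by (simp add: adj2_def vec_eq_iff forall_2 matrix_matrix_mult_def sum_2 mat_def det_2 algebra_simps)

lemma matrix_inv_adj2: assumes "det M = 1" shows "matrix_inv M = adj2 M"
proof -
  have ex: "\<exists>A'. M ** A' = mat 1 \<and> A' ** M = mat 1"
    using adj2_right[OF assms] adj2_left[OF assms] by blast
  have "M ** matrix_inv M = mat 1 \<and> matrix_inv M ** M = mat 1"
    unfolding matrix_inv_def by (rule someI_ex[OF ex])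
  hence "matrix_inv M ** M = mat 1" by blast
  hence "(matrix_inv M ** M) ** adj2 M = adj2 M" by (simp add: matrix_mul_lid)
  thus ?thesis by (simp add: matrix_mul_assoc[symmetric] adj2_right[OF assms] matrix_mul_rid)
qed

lemma trace_adj2: "trace (adj2 M) = trace M"
  by (simp add: adj2_def trace_def sum_2)

lemma det_adj2: "det (adj2 M) = det M"
  by (simp add: adj2_def det_2)

lemma trace_scaleR: "trace (s *\<^sub>R (M::mat2)) = s * trace M"
  by (simp add: trace_def sum_2 algebra_simps)

lemma det_scaleR: "det (s *\<^sub>R (M::mat2)) = s^2 * det M"
  by (simp add: det_2 algebra_simps power2_eq_square)

lemma trace_conj: assumes "det g = 1" shows "trace (g ** C ** matrix_inv g) = trace (C::mat2)"
proof -
  have "trace (g ** C ** adj2 g) = trace (adj2 g ** (g ** C))" by (rule trace_mul_sym)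
  also have "\<dots> = trace C" by (simp add: matrix_mul_assoc adj2_left[OF assms] matrix_mul_lid)
  finally show ?thesis by (simp add: matrix_inv_adj2[OF assms])
qed

lemma det_conj: assumes "det g = 1" shows "det (g ** C ** matrix_inv g) = det (C::mat2)"
  by (simp add: det_mul matrix_inv_adj2[OF assms] det_adj2 assms)

lemma trace_lin: "trace ((s *\<^sub>R X - Y) ** (B::mat2)) = s * trace (X ** B) - trace (Y ** B)"
  by (simp add: trace_def sum_2 matrix_matrix_mult_def algebra_simps)

lemma mpow_rec: assumes "det A = 1"
  shows "trace (mpow A (Suc (Suc m)) ** B) = trace A * trace (mpow A (Suc m) ** B) - trace (mpow A m ** B)"
proof -
  have AA: "A ** A = trace A *\<^sub>R A - mat 1"
    using assms by (simp add: vec_eq_iff forall_2 matrix_matrix_mult_def sum_2 mat_def det_2 trace_def algebra_simps)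
  have "mpow A (Suc (Suc m)) = (A ** A) ** mpow A m" by (simp add: matrix_mul_assoc)
  also have "\<dots> = trace A *\<^sub>R (A ** mpow A m) - mpow A m"
    unfolding AA by (simp add: vec_eq_iff forall_2 matrix_matrix_mult_def sum_2 mat_def algebra_simps)
  finally have "mpow A (Suc (Suc m)) = trace A *\<^sub>R mpow A (Suc m) - mpow A m" by simp
  thus ?thesis by (simp only: trace_lin)
qed

lemma closed_form:
  fixes t :: "nat \<Rightarrow> real"
  assumes rec: "\<And>m. t (Suc (Suc m)) = \<tau> * t (Suc m) - t m"
    and s: "l + u = \<tau>" and p: "l * u = 1" and d: "l \<noteq> u"
  shows "\<exists>a b. \<forall>m. t m = a * l^m + b * u^m"
proof -
  define a where "a = (t 1 - u * t 0) / (l - u)"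
  define b where "b = (l * t 0 - t 1) / (l - u)"
  have lu: "l - u \<noteq> 0" using d by simp
  have l1: "\<tau> * l = l * l + l * u" unfolding s[symmetric] by (simp add: algebra_simps)
  have u1: "\<tau> * u = u * u + l * u" unfolding s[symmetric] by (simp add: algebra_simps)
  have ll: "l^2 = \<tau> * l - 1" using l1 p by (simp add: power2_eq_square)
  have uu: "u^2 = \<tau> * u - 1" using u1 p by (simp add: power2_eq_square)
  have "t m = a * l^m + b * u^m \<and> t (Suc m) = a * l^(Suc m) + b * u^(Suc m)" for m
  proof (induction m)
    case 0
    have "a + b = ((t 1 - u * t 0) + (l * t 0 - t 1)) / (l - u)"
      unfolding a_def b_def by (rule add_divide_distrib[symmetric])
    also have "\<dots> = ((l - u) * t 0) / (l - u)" by (simp add: algebra_simps)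
    finally have T0: "t 0 = a + b" using lu by simp
    have E1: "a * l + b * u = ((t 1 - u * t 0) * l + (l * t 0 - t 1) * u) / (l - u)"
      unfolding a_def b_def by (simp add: add_divide_distrib)
    have E2: "(t 1 - u * t 0) * l + (l * t 0 - t 1) * u = (l - u) * t 1"
      using p by (simp add: algebra_simps)
    have "t 1 = a * l + b * u" using lu E1 E2 by simp
    thus ?case using T0 by simp
  next
    case (Suc m)
    have "t (Suc (Suc m)) = \<tau> * (a * l^(Suc m) + b * u^(Suc m)) - (a * l^m + b * u^m)"
      using rec Suc by simp
    also have "\<dots> = a * l^m * (\<tau> * l - 1) + b * u^m * (\<tau> * u - 1)"
      by (simp add: algebra_simps)
    also have "\<dots> = a * l^(Suc (Suc m)) + b * u^(Suc (Suc m))"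
      unfolding ll[symmetric] uu[symmetric] by (simp add: power2_eq_square algebra_simps)
    finally show ?case using Suc by simp
  qed
  thus ?thesis by blast
qed

lemma core3:
  fixes a b c x y z s :: real
  assumes "x > 0" "y > 0" "z > 0" "x \<noteq> y" "z \<noteq> x" "z \<noteq> y" "c > 0"
    and "s = 1 \<or> s = -1"
    and ex: "a * x^2 + b = s * c * x" and ey: "a * y^2 + b = s * c * y"
    and ez: "\<bar>a * z^2 + b\<bar> = c * z"
  shows False
proof -
  have "a * (x^2 - y^2) = s * c * (x - y)" using ex ey by (simp add: algebra_simps)
  hence "a * (x + y) * (x - y) = s * c * (x - y)" by (simp add: power2_eq_square algebra_simps)
  hence sa: "a * (x + y) = s * c" using assms(4) by simp
  have "b = s * c * x - a * x^2" using ex by simp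
  also have "\<dots> = a * (x + y) * x - a * x^2" using sa by simp
  finally have bb: "b = a * x * y" by (simp add: power2_eq_square algebra_simps)
  have a0: "a \<noteq> 0" using sa assms(7,8) by auto
  have D: "a * z^2 + b = c * z \<or> a * z^2 + b = - (c * z)" using ez by linarith
  have P1: "a * ((z - x) * (z - y)) = (a * z^2 + b) - a * (x + y) * z"
    unfolding bb by (simp add: algebra_simps power2_eq_square)
  have P2: "a * ((z + x) * (z + y)) = (a * z^2 + b) + a * (x + y) * z"
    unfolding bb by (simp add: algebra_simps power2_eq_square)
  have cz: "c * z = s * c * z" if "s = 1" using that by simp
  have cz2: "c * z = - (s * c * z)" if "s = -1" using that by simp
  have sz: "a * (x + y) * z = s * c * z" using sa by simp
  have "a * ((z - x) * (z - y)) = 0 \<or> a * ((z + x) * (z + y)) = 0"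
    using D P1 P2 sz assms(8) cz cz2 by (smt (verit))
  hence "(z - x) * (z - y) = 0 \<or> (z + x) * (z + y) = 0"
    using a0 by simp
  moreover have "(z + x) * (z + y) > 0" using assms(1-3) by simp
  ultimately show False using assms(5,6) by auto
qed

lemma sgn_ex: "\<bar>v::real\<bar> = c * w \<Longrightarrow> \<exists>s. (s = 1 \<or> s = -1) \<and> v = s * c * w"
proof (cases "v \<ge> 0")
  case True assume "\<bar>v\<bar> = c * w" thus ?thesis using True by (intro exI[of _ 1]) auto
next
  case False assume "\<bar>v\<bar> = c * w" thus ?thesis using False by (intro exI[of _ "-1"]) auto
qed

lemma three:
  fixes a b c x y z :: real
  assumes "x > 0" "y > 0" "z > 0" "x \<noteq> y" "z \<noteq> x" "z \<noteq> y" "c > 0"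
    and ex: "\<bar>a * x + b / x\<bar> = c" and ey: "\<bar>a * y + b / y\<bar> = c"
    and ez: "\<bar>a * z + b / z\<bar> = c"
  shows False
proof -
  have cl: "\<bar>a * w^2 + b\<bar> = c * w" if "w > 0" "\<bar>a * w + b / w\<bar> = c" for w :: real
  proof -
    have "a * w^2 + b = (a * w + b / w) * w" using that by (simp add: field_simps power2_eq_square)
    hence "\<bar>a * w^2 + b\<bar> = \<bar>a * w + b / w\<bar> * w" using that by (simp add: abs_mult)
    thus ?thesis using that by simp
  qed
  have X: "\<bar>a * x^2 + b\<bar> = c * x" and Y: "\<bar>a * y^2 + b\<bar> = c * y" and Z: "\<bar>a * z^2 + b\<bar> = c * z"
    using cl assms by auto
  have sx: "\<exists>s. (s = 1 \<or> s = -1) \<and> a * x^2 + b = s * c * x" using sgn_ex[OF X] .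
  have sy: "\<exists>s. (s = 1 \<or> s = -1) \<and> a * y^2 + b = s * c * y" using sgn_ex[OF Y] .
  have sz: "\<exists>s. (s = 1 \<or> s = -1) \<and> a * z^2 + b = s * c * z" using sgn_ex[OF Z] .
  obtain s1 s2 s3 where s: "s1 = 1 \<or> s1 = -1" "s2 = 1 \<or> s2 = -1" "s3 = 1 \<or> s3 = -1"
    and e1: "a * x^2 + b = s1 * c * x" and e2: "a * y^2 + b = s2 * c * y" and e3: "a * z^2 + b = s3 * c * z"
    using sx sy sz by blast
  have n1: "x \<noteq> z" and n2: "y \<noteq> x" and n3: "y \<noteq> z" and n4: "y \<noteq> z" and n5: "x \<noteq> y" and n6: "x \<noteq> z"
    using assms by auto
  have "s1 = s2 \<or> s1 = s3 \<or> s2 = s3" using s by auto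
  thus False
  proof (elim disjE)
    assume "s1 = s2" show False by (rule core3[OF assms(1-7) s(1) e1 _ Z]) (use e2 \<open>s1 = s2\<close> in simp)
  next
    assume "s1 = s3" show False by (rule core3[OF assms(1,3,2) n1 n2 n3 assms(7) s(1) e1 _ Y]) (use e3 \<open>s1 = s3\<close> in simp)
  next
    assume "s2 = s3" show False by (rule core3[OF assms(2,3,1) n4 n5 n6 assms(7) s(2) e2 _ X]) (use e3 \<open>s2 = s3\<close> in simp)
  qed
qed

lemma abs_form:
  fixes l a b :: real
  assumes "l \<noteq> 0"
  shows "\<bar>a * l^m + b * (1/l)^m\<bar> = \<bar>a * \<bar>l\<bar>^m + b / \<bar>l\<bar>^m\<bar>"
proof (cases "l > 0")
  case True thus ?thesis by (simp add: power_one_over)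
next
  case False
  define r where "r = - l"
  have r: "l = - r" "r > 0" using False assms by (auto simp: r_def)
  have p1: "l^m = (-1)^m * r^m" unfolding r(1) by (rule power_minus)
  have q: "1/l = - (1/r)" using r by simp
  have "(1/l)^m = (-1)^m * (1/r)^m" unfolding q by (rule power_minus)
  hence p2: "(1/l)^m = (-1)^m * (1 / r^m)" by (simp only: power_one_over)
  have "a * l^m + b * (1/l)^m = (-1)^m * (a * r^m + b / r^m)"
    unfolding p1 p2 by (simp add: algebra_simps)
  moreover have "\<bar>l\<bar> = r" using r by simp
  ultimately show ?thesis by (simp add: abs_mult)
qed

lemma pow_inj:
  fixes r :: real
  assumes "r > 0" "r \<noteq> 1" "r^m = r^n" shows "m = n"
proof (cases "r > 1")
  case True thus ?thesis using assms power_inject_exp by blast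
next
  case False
  hence "r < 1" using assms by simp
  hence "1/r > 1" using assms by simp
  moreover have "(1/r)^m = (1/r)^n" using assms by (simp add: power_one_over)
  ultimately show ?thesis using power_inject_exp by blast
qed

lemma card_le2:
  fixes S :: "nat set"
  assumes "\<And>x y z. x \<in> S \<Longrightarrow> y \<in> S \<Longrightarrow> z \<in> S \<Longrightarrow> x \<noteq> y \<Longrightarrow> y \<noteq> z \<Longrightarrow> x \<noteq> z \<Longrightarrow> False"
  shows "finite S \<and> card S \<le> 2"
proof (rule ccontr)
  assume "\<not> (finite S \<and> card S \<le> 2)"
  then obtain T where "T \<subseteq> S" "card T = 3"
  proof (cases "finite S")
    case True
    assume h: "\<And>T. T \<subseteq> S \<Longrightarrow> card T = 3 \<Longrightarrow> thesis" "\<not> (finite S \<and> card S \<le> 2)"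
    hence "3 \<le> card S" using True by simp
    thus thesis using obtain_subset_with_card_n h(1) by metis
  next
    case False
    assume h: "\<And>T. T \<subseteq> S \<Longrightarrow> card T = 3 \<Longrightarrow> thesis"
    thus thesis using infinite_arbitrarily_large[OF False, of 3] by blast
  qed
  then obtain x y z where "{x,y,z} \<subseteq> S" "x \<noteq> y" "y \<noteq> z" "x \<noteq> z" by (metis card_3_iff)
  thus False using assms by auto
qed


lemma mat1_inv: "matrix_inv (mat 1 :: mat2) = mat 1"
proof -
  have "det (mat 1 :: mat2) = 1" by simp
  hence "matrix_inv (mat 1 :: mat2) = adj2 (mat 1)" by (rule matrix_inv_adj2)
  also have "\<dots> = mat 1" by (simp add: adj2_def mat_def vec_eq_iff forall_2)
  finally show ?thesis .
qed

lemma fclass_elem: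
  assumes "\<Gamma> \<subseteq> SL2" "C \<in> \<Gamma>" "Y \<in> fclass \<Gamma> C"
  shows "\<bar>trace Y\<bar> = \<bar>trace C\<bar> \<and> det Y = 1"
proof -
  obtain g s where g: "g \<in> \<Gamma>" "s = 1 \<or> s = -1" and Y: "Y = s *\<^sub>R (g ** C ** matrix_inv g)"
    using assms(3) unfolding fclass_def by blast
  have dg: "det g = 1" using g assms(1) by (auto simp: SL2_def)
  have dC: "det C = 1" using assms(1,2) by (auto simp: SL2_def)
  have "trace Y = s * trace C" unfolding Y trace_scaleR trace_conj[OF dg] ..
  moreover have "det Y = s^2 * det C" unfolding Y det_scaleR det_conj[OF dg] ..
  ultimately show ?thesis using g(2) dC by auto
qed

lemma utilde_trace:
  assumes f: "fuchsian \<Gamma>" and C: "C \<in> \<Gamma>"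
    and u: "utilde (fclass \<Gamma> X) = utilde (fclass \<Gamma> C)"
  shows "\<bar>trace X\<bar> = \<bar>trace C\<bar>"
proof -
  have sub: "\<Gamma> \<subseteq> SL2" and one: "mat 1 \<in> \<Gamma>" using f unfolding fuchsian_def by auto
  have "X = 1 *\<^sub>R (mat 1 ** X ** matrix_inv (mat 1))"
    by (simp add: mat1_inv matrix_mul_lid matrix_mul_rid)
  hence XX: "X \<in> fclass \<Gamma> X" unfolding fclass_def using one by blast
  have "fclass \<Gamma> X \<in> utilde (fclass \<Gamma> C)" using u unfolding utilde_def by auto
  hence "fclass \<Gamma> X = fclass \<Gamma> C \<or> fclass \<Gamma> X = cinv (fclass \<Gamma> C)" unfolding utilde_def by auto
  thus ?thesis
  proof
    assume "fclass \<Gamma> X = fclass \<Gamma> C"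
    thus ?thesis using XX fclass_elem[OF sub C] by auto
  next
    assume "fclass \<Gamma> X = cinv (fclass \<Gamma> C)"
    then obtain Y where Y: "Y \<in> fclass \<Gamma> C" "X = matrix_inv Y" using XX unfolding cinv_def by auto
    have "\<bar>trace Y\<bar> = \<bar>trace C\<bar>" "det Y = 1" using fclass_elem[OF sub C Y(1)] by auto
    thus ?thesis using Y(2) matrix_inv_adj2 trace_adj2 by metis
  qed
qed

theorem lemma3p7:
  fixes \<Gamma> :: "mat2 set" and \<alpha> \<beta> \<gamma> :: "mat2 set" and P :: "mat2 \<times> mat2"
  assumes "fuchsian \<Gamma>"
    and "\<alpha> \<in> pihat \<Gamma>" and "\<beta> \<in> pihat \<Gamma>" and "\<gamma> \<in> pihat \<Gamma>"
    and "transversal \<alpha> \<beta>"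
    and "P \<in> ipoints \<alpha> \<beta>"
  shows "\<forall>e \<in> {1, -1::int}.
           finite {m::nat. 0 < m \<and> utilde (star_e \<Gamma> m P e) = utilde \<gamma>} \<and>
           card {m::nat. 0 < m \<and> utilde (star_e \<Gamma> m P e) = utilde \<gamma>} \<le> 2"
proof
  fix e :: int
  obtain A B where PAB: "P = (A, B)" by (cases P)
  have Aa: "A \<in> \<alpha>" using assms(6) PAB unfolding ipoints_def by auto
  have hA: "hyperbolic_elt A" using assms(5) Aa unfolding transversal_def by auto
  have dA: "det A = 1" and tA: "\<bar>trace A\<bar> > 2" using hA unfolding hyperbolic_elt_def SL2_def by auto
  obtain C where C: "C \<in> \<Gamma>" "\<gamma> = fclass \<Gamma> C" using assms(4) unfolding pihat_def by auto
  define c where "c = \<bar>trace C\<bar>"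
  have nell: "\<forall>M\<in>\<Gamma>. \<not> \<bar>trace M\<bar> < 2" using assms(1) unfolding fuchsian_def by blast
  have c2: "c > 0" using nell C(1) unfolding c_def by fastforce
  define B' where "B' = (if e = 1 then B else matrix_inv B)"
  have st: "star_e \<Gamma> m P e = fclass \<Gamma> (mpow A m ** B')" for m
    by (simp add: star_e_def loop_fst_def loop_snd_def PAB B'_def)
  define t where "t m = trace (mpow A m ** B')" for m
  define \<tau> where "\<tau> = trace A"
  define q where "q = sqrt (\<tau>^2 - 4)"
  define l where "l = (\<tau> + q) / 2"
  define u where "u = (\<tau> - q) / 2"
  have "(2::real)^2 < \<bar>\<tau>\<bar>^2" unfolding \<tau>_def by (rule power_strict_mono[OF tA]) auto
  hence t4: "\<tau>^2 - 4 > 0" by simp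
  have q0: "q > 0" unfolding q_def using t4 by simp
  have qq: "q^2 = \<tau>^2 - 4" unfolding q_def using q0 q_def by simp
  have lu_s: "l + u = \<tau>" unfolding l_def u_def by (simp add: field_simps)
  have lu_p: "l * u = 1"
  proof -
    have "l * u = (\<tau>^2 - q^2) / 4" unfolding l_def u_def by (simp add: power2_eq_square algebra_simps)
    thus ?thesis using qq by simp
  qed
  have lu_d: "l \<noteq> u" unfolding l_def u_def using q0 by simp
  have rec: "t (Suc (Suc m)) = \<tau> * t (Suc m) - t m" for m
    unfolding t_def \<tau>_def by (rule mpow_rec[OF dA])
  obtain a b where ab: "\<And>m. t m = a * l^m + b * u^m"
    using closed_form[of t \<tau> l u, OF rec lu_s lu_p lu_d] by blast
  have l0: "l \<noteq> 0" using lu_p by auto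
  have u_eq: "u = 1 / l" using lu_p l0 by (simp add: field_simps)
  have l1: "\<bar>l\<bar> \<noteq> 1"
  proof
    assume "\<bar>l\<bar> = 1"
    hence "l = 1 \<or> l = -1" by auto
    thus False using u_eq lu_d by auto
  qed
  have absl: "\<bar>l\<bar> > 0" using l0 by simp
  define S where "S = {m::nat. 0 < m \<and> utilde (star_e \<Gamma> m P e) = utilde \<gamma>}"
  define S' where "S' = {m::nat. \<bar>a * \<bar>l\<bar>^m + b / \<bar>l\<bar>^m\<bar> = c}"
  have sub: "S \<subseteq> S'"
  proof
    fix m assume "m \<in> S"
    hence "utilde (fclass \<Gamma> (mpow A m ** B')) = utilde (fclass \<Gamma> C)" unfolding S_def st C(2) by simp
    hence "\<bar>t m\<bar> = c" unfolding t_def c_def by (rule utilde_trace[OF assms(1) C(1)])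
    thus "m \<in> S'" unfolding S'_def using ab[of m] abs_form[OF l0, of a m b] u_eq by simp
  qed
  have fin: "finite S' \<and> card S' \<le> 2"
  proof (rule card_le2)
    fix x y z assume xyz: "x \<in> S'" "y \<in> S'" "z \<in> S'" "x \<noteq> y" "y \<noteq> z" "x \<noteq> z"
    have d1: "\<bar>l\<bar>^x \<noteq> \<bar>l\<bar>^y" using pow_inj[OF absl l1] xyz by blast
    have d2: "\<bar>l\<bar>^z \<noteq> \<bar>l\<bar>^x" using pow_inj[OF absl l1] xyz by metis
    have d3: "\<bar>l\<bar>^z \<noteq> \<bar>l\<bar>^y" using pow_inj[OF absl l1] xyz by metis
    show False
      by (rule three[OF zero_less_power[OF absl] zero_less_power[OF absl] zero_less_power[OF absl] d1 d2 d3 c2])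
         (use xyz in \<open>auto simp: S'_def\<close>)
  qed
  show "finite {m::nat. 0 < m \<and> utilde (star_e \<Gamma> m P e) = utilde \<gamma>} \<and>
           card {m::nat. 0 < m \<and> utilde (star_e \<Gamma> m P e) = utilde \<gamma>} \<le> 2"
    using fin sub finite_subset card_mono unfolding S_def[symmetric]
    by (metis le_trans)
qed

end
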